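(* Let $\alpha\colon S\to\mathcal I(X)$ be a representation of a countable discrete inverse semigroup $S$ with identity, and let $A\subseteq X$ be $S$-domain F\o lner. Then for every $\varepsilon>0$ and finite $\mathcal F\subseteq S$ there is a finite non-empty $F_0\subseteq A$ consisting of a single $\approx$-equivalence class (i.e. $u\approx v$ for all $u,v\in F_0$) such that $|\alpha_s(F_0\cap D_{s^*s})\setminus F_0|<\varepsilon|F_0|$ for all $s\in\mathcal F$.
   Context: Inverse semigroup: each $s$ has a unique $s^*$ with $ss^*s=s$, $s^*ss^*=s^*$. A representation is a unital homomorphism $\alpha\colon S\to\mathcal I(X)$ into partial bijections of $X$; $D_{s^*s}$ is the domain of $\alpha_s$. For $u,v\in X$, $u\approx v$ iff there is $s\in S$ with $u\in D_{s^*s}$ and $\alpha_s(u)=v$ (an equivalence relation). $A$ is $S$-domain F\o lner if there are finite non-empty $F_n\subseteq A$ with $|\alpha_s(F_n\cap D_{s^*s})\setminus F_n|/|F_n|\to0$ for every $s\in S$. *)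

theory Defs
  imports Complex_Main "HOL-Library.Countable_Set"
begin

definition inverse_monoid :: "('s \<Rightarrow> 's \<Rightarrow> 's) \<Rightarrow> 's \<Rightarrow> bool" where
  "inverse_monoid mult e \<longleftrightarrow>
     (\<forall>a b c. mult (mult a b) c = mult a (mult b c)) \<and>
     (\<forall>a. mult e a = a \<and> mult a e = a) \<and>
     (\<forall>s. \<exists>!t. mult (mult s t) s = s \<and> mult (mult t s) t = t)"

definition istar :: "('s \<Rightarrow> 's \<Rightarrow> 's) \<Rightarrow> 's \<Rightarrow> 's" where
  "istar mult s = (THE t. mult (mult s t) s = s \<and> mult (mult t s) t = t)"

definition partial_bij :: "'x set \<Rightarrow> ('x \<Rightarrow> 'x option) \<Rightarrow> bool" where
  "partial_bij X f \<longleftrightarrow> dom f \<subseteq> X \<and> ran f \<subseteq> X \<and> inj_on f (dom f)"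

definition representation ::
  "('s \<Rightarrow> 's \<Rightarrow> 's) \<Rightarrow> 's \<Rightarrow> 'x set \<Rightarrow> ('s \<Rightarrow> 'x \<Rightarrow> 'x option) \<Rightarrow> bool" where
  "representation mult e X \<alpha> \<longleftrightarrow>
     (\<forall>s. partial_bij X (\<alpha> s)) \<and>
     (\<forall>s t. \<alpha> (mult s t) = (\<alpha> s \<circ>\<^sub>m \<alpha> t)) \<and>
     \<alpha> e = (\<lambda>x. if x \<in> X then Some x else None)"

definition Dom :: "('s \<Rightarrow> 'x \<Rightarrow> 'x option) \<Rightarrow> 's \<Rightarrow> 'x set" where
  "Dom \<alpha> e = dom (\<alpha> e)"

definition pimage :: "('x \<Rightarrow> 'x option) \<Rightarrow> 'x set \<Rightarrow> 'x set" where
  "pimage f B = {y. \<exists>x\<in>B. f x = Some y}"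

definition orbit_rel ::
  "('s \<Rightarrow> 's \<Rightarrow> 's) \<Rightarrow> ('s \<Rightarrow> 'x \<Rightarrow> 'x option) \<Rightarrow> 'x \<Rightarrow> 'x \<Rightarrow> bool" where
  "orbit_rel mult \<alpha> u v \<longleftrightarrow>
     (\<exists>s. u \<in> Dom \<alpha> (mult (istar mult s) s) \<and> \<alpha> s u = Some v)"

definition domain_folner ::
  "('s \<Rightarrow> 's \<Rightarrow> 's) \<Rightarrow> ('s \<Rightarrow> 'x \<Rightarrow> 'x option) \<Rightarrow> 'x set \<Rightarrow> bool" where
  "domain_folner mult \<alpha> A \<longleftrightarrow>
     (\<exists>F :: nat \<Rightarrow> 'x set. (\<forall>n. finite (F n) \<and> F n \<noteq> {} \<and> F n \<subseteq> A) \<and>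
        (\<forall>s. (\<lambda>n. real (card (pimage (\<alpha> s) (F n \<inter> Dom \<alpha> (mult (istar mult s) s)) - F n))
                   / real (card (F n))) \<longlonglongrightarrow> 0))"

end

theory Submission
  imports Defs
begin

lemma istar_prop:
  assumes "inverse_monoid mult e"
  shows "mult (mult s (istar mult s)) s = s \<and> mult (mult (istar mult s) s) (istar mult s) = istar mult s"
proof -
  have "\<exists>!t. mult (mult s t) s = s \<and> mult (mult t s) t = t"
    using assms unfolding inverse_monoid_def by blast
  then show ?thesis unfolding istar_def by (rule theI')
qed

lemma alpha_decomp:
  assumes im: "inverse_monoid mult e" and rep: "representation mult e X \<alpha>"
  shows "\<alpha> s = (\<alpha> s \<circ>\<^sub>m \<alpha> (istar mult s)) \<circ>\<^sub>m \<alpha> s"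
proof -
  have "\<alpha> s = \<alpha> (mult (mult s (istar mult s)) s)" using istar_prop[OF im] by simp
  then show ?thesis using rep unfolding representation_def by simp
qed

lemma back_step:
  assumes im: "inverse_monoid mult e" and rep: "representation mult e X \<alpha>"
    and h: "\<alpha> s u = Some v"
  shows "\<alpha> (istar mult s) v = Some u"
proof -
  have "\<alpha> s u = ((\<alpha> s \<circ>\<^sub>m \<alpha> (istar mult s)) \<circ>\<^sub>m \<alpha> s) u"
    using alpha_decomp[OF im rep] by metis
  then have "(\<alpha> s \<circ>\<^sub>m \<alpha> (istar mult s)) v = Some v" using h by (simp add: map_comp_def)
  then obtain w where w: "\<alpha> (istar mult s) v = Some w" "\<alpha> s w = Some v"
    by (auto simp: map_comp_def split: option.splits)
  have "inj_on (\<alpha> s) (dom (\<alpha> s))" using rep unfolding representation_def partial_bij_def by blast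
  then have "w = u" using w h by (auto simp: inj_on_def dom_def)
  then show ?thesis using w by simp
qed

lemma dom_iff:
  assumes im: "inverse_monoid mult e" and rep: "representation mult e X \<alpha>"
  shows "(u \<in> Dom \<alpha> (mult (istar mult s) s)) = (\<alpha> s u \<noteq> None)"
proof -
  have c: "\<alpha> (mult (istar mult s) s) = \<alpha> (istar mult s) \<circ>\<^sub>m \<alpha> s"
    using rep unfolding representation_def by simp
  show ?thesis
  proof
    assume "u \<in> Dom \<alpha> (mult (istar mult s) s)"
    then show "\<alpha> s u \<noteq> None" unfolding Dom_def c by (auto simp: map_comp_def split: option.splits)
  next
    assume "\<alpha> s u \<noteq> None"
    then obtain v where "\<alpha> s u = Some v" by auto
    then show "u \<in> Dom \<alpha> (mult (istar mult s) s)"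
      using back_step[OF im rep] unfolding Dom_def c by (auto simp: map_comp_def)
  qed
qed

lemma orbit_rel_iff:
  assumes im: "inverse_monoid mult e" and rep: "representation mult e X \<alpha>"
  shows "orbit_rel mult \<alpha> u v = (\<exists>s. \<alpha> s u = Some v)"
  unfolding orbit_rel_def using dom_iff[OF im rep] by auto

lemma finite_pimage: "finite B \<Longrightarrow> finite (pimage f B)"
proof -
  assume "finite B"
  moreover have "pimage f B \<subseteq> (\<lambda>x. the (f x)) ` B" unfolding pimage_def by force
  ultimately show ?thesis using finite_surj by blast
qed

theorem mainTheorem17:
  fixes mult :: "'s \<Rightarrow> 's \<Rightarrow> 's" and e :: 's
    and X :: "'x set" and \<alpha> :: "'s \<Rightarrow> 'x \<Rightarrow> 'x option" and A :: "'x set"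
  assumes "inverse_monoid mult e"
    and "countable (UNIV :: 's set)"
    and "representation mult e X \<alpha>"
    and "A \<subseteq> X"
    and "domain_folner mult \<alpha> A"
  shows "\<forall>\<epsilon>::real. \<epsilon> > 0 \<longrightarrow> (\<forall>\<F>. finite \<F> \<longrightarrow>
           (\<exists>F0. finite F0 \<and> F0 \<noteq> {} \<and> F0 \<subseteq> A \<and>
              (\<forall>u\<in>F0. \<forall>v\<in>F0. orbit_rel mult \<alpha> u v) \<and>
              (\<forall>s\<in>\<F>. real (card (pimage (\<alpha> s) (F0 \<inter> Dom \<alpha> (mult (istar mult s) s)) - F0))
                        < \<epsilon> * real (card F0))))"
proof (intro allI impI)
  note im = assms(1) and rep = assms(3)
  fix \<epsilon> :: real and \<F> :: "'s set"
  assume \<epsilon>: "\<epsilon> > 0" and fin\<F>: "finite \<F>"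
  obtain F :: "nat \<Rightarrow> 'x set" where F: "\<And>n. finite (F n) \<and> F n \<noteq> {} \<and> F n \<subseteq> A"
    and lim: "\<And>s. (\<lambda>n. real (card (pimage (\<alpha> s) (F n \<inter> Dom \<alpha> (mult (istar mult s) s)) - F n))
                   / real (card (F n))) \<longlonglongrightarrow> 0"
    using assms(5) unfolding domain_folner_def by blast
  define bd where "bd s Q = pimage (\<alpha> s) (Q \<inter> Dom \<alpha> (mult (istar mult s) s)) - Q" for s Q
  define \<delta> where "\<delta> = \<epsilon> / (real (card \<F>) + 1)"
  have \<delta>: "\<delta> > 0" unfolding \<delta>_def using \<epsilon> by simp
  have "eventually (\<lambda>n. \<forall>s\<in>\<F>. real (card (bd s (F n))) / real (card (F n)) < \<delta>) sequentially"
  proof (rule eventually_ball_finite[OF fin\<F>], rule ballI)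
    fix s show "eventually (\<lambda>n. real (card (bd s (F n))) / real (card (F n)) < \<delta>) sequentially"
      using order_tendstoD(2)[OF lim \<delta>] unfolding bd_def .
  qed
  then obtain n where n: "\<forall>s\<in>\<F>. real (card (bd s (F n))) / real (card (F n)) < \<delta>"
    using eventually_sequentially by auto
  define G where "G = F n"
  have finG: "finite G" and neG: "G \<noteq> {}" and GA: "G \<subseteq> A" using F unfolding G_def by auto
  have cG: "real (card G) > 0" using finG neG by (simp add: card_gt_0_iff)
  have bdG: "\<forall>s\<in>\<F>. real (card (bd s G)) < \<delta> * real (card G)"
    using n cG unfolding G_def by (simp add: pos_divide_less_eq)
  have sumG: "(\<Sum>s\<in>\<F>. real (card (bd s G))) < \<epsilon> * real (card G)"
  proof (cases "\<F> = {}")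
    case True then show ?thesis using \<epsilon> cG by simp
  next
    case False
    have "(\<Sum>s\<in>\<F>. real (card (bd s G))) < (\<Sum>s\<in>\<F>. \<delta> * real (card G))"
      by (rule sum_strict_mono[OF fin\<F> False]) (use bdG in auto)
    also have "\<dots> = real (card \<F>) * \<delta> * real (card G)" by simp
    also have "\<dots> \<le> \<epsilon> * real (card G)"
    proof -
      have "real (card \<F>) * \<delta> \<le> \<epsilon>" unfolding \<delta>_def using \<epsilon>
        by (simp add: field_simps)
      then show ?thesis using cG by (simp add: mult_right_mono)
    qed
    finally show ?thesis .
  qed
  define R where "R = {(u,v). u \<in> G \<and> v \<in> G \<and> (\<exists>s. \<alpha> s u = Some v)}"
  have eqR: "equiv G R"
  proof (rule equivI)
    show "R \<subseteq> G \<times> G" unfolding R_def by auto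
    show "refl_on G R" unfolding refl_on_def R_def
    proof (auto)
      fix u assume "u \<in> G"
      then have "u \<in> X" using GA assms(4) by auto
      then have "\<alpha> e u = Some u" using rep unfolding representation_def by simp
      then show "\<exists>s. \<alpha> s u = Some u" by blast
    qed
    show "sym R" unfolding sym_def R_def using back_step[OF im rep] by blast
    show "trans R" unfolding trans_def R_def
    proof (auto)
      fix u v w s t assume "\<alpha> s u = Some v" "\<alpha> t v = Some w"
      then have "\<alpha> (mult t s) u = Some w" using rep unfolding representation_def
        by (simp add: map_comp_def)
      then show "\<exists>s. \<alpha> s u = Some w" by blast
    qed
  qed
  define P where "P = G // R"
  have finP: "finite P" unfolding P_def by (rule finite_quotient[OF finG]) (auto simp: R_def)
  have Qsub: "Q \<subseteq> G" if "Q \<in> P" for Q using in_quotient_imp_subset[OF eqR] that P_def by blast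
  have finQ: "finite Q" if "Q \<in> P" for Q using Qsub[OF that] finG finite_subset by blast
  have cardG: "card G = (\<Sum>Q\<in>P. card Q)"
  proof -
    have "card (\<Union>P) = sum card P"
      by (rule card_Union_disjoint)
        (use quotient_disj[OF eqR] finQ in \<open>auto simp: P_def pairwise_def disjnt_def\<close>)
    then show ?thesis using Union_quotient[OF eqR] P_def by simp
  qed
  have inj: "inj_on (\<alpha> s) (dom (\<alpha> s))" for s
    using rep unfolding representation_def partial_bij_def by blast
  have bd_sub: "bd s Q \<subseteq> bd s G" if Q: "Q \<in> P" for s Q
  proof
    fix y assume "y \<in> bd s Q"
    then obtain x where x: "x \<in> Q" "x \<in> Dom \<alpha> (mult (istar mult s) s)" "\<alpha> s x = Some y" "y \<notin> Q"
      unfolding bd_def pimage_def by auto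
    have "y \<notin> G"
    proof
      assume "y \<in> G"
      then have "(x, y) \<in> R" using x Qsub[OF Q] unfolding R_def by blast
      then show False using in_quotient_imp_closed[OF eqR, of Q x y] Q x P_def by blast
    qed
    then show "y \<in> bd s G" using x Qsub[OF Q] unfolding bd_def pimage_def by blast
  qed
  have bd_disj: "bd s Q1 \<inter> bd s Q2 = {}" if "Q1 \<in> P" "Q2 \<in> P" "Q1 \<noteq> Q2" for s Q1 Q2
  proof (rule ccontr)
    assume "bd s Q1 \<inter> bd s Q2 \<noteq> {}"
    then obtain y x1 x2 where "x1 \<in> Q1" "\<alpha> s x1 = Some y" "x2 \<in> Q2" "\<alpha> s x2 = Some y"
      unfolding bd_def pimage_def by blast
    moreover then have "x1 = x2" using inj[of s] by (auto simp: inj_on_def dom_def)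
    ultimately have "Q1 \<inter> Q2 \<noteq> {}" by blast
    then show False using quotient_disj[OF eqR] that P_def by blast
  qed
  have finbdG: "finite (bd s G)" for s unfolding bd_def using finite_pimage finG by blast
  have sumQ: "(\<Sum>Q\<in>P. real (card (bd s Q))) \<le> real (card (bd s G))" for s
  proof -
    have "(\<Sum>Q\<in>P. card (bd s Q)) = card (\<Union>Q\<in>P. bd s Q)"
    proof (rule card_UN_disjoint[symmetric])
      show "finite P" by (rule finP)
      show "\<forall>i\<in>P. finite (bd s i)" using finbdG bd_sub finite_subset by metis
      show "\<forall>i\<in>P. \<forall>j\<in>P. i \<noteq> j \<longrightarrow> bd s i \<inter> bd s j = {}" using bd_disj by blast
    qed
    also have "\<dots> \<le> card (bd s G)" by (rule card_mono[OF finbdG]) (use bd_sub in blast)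
    finally have "(\<Sum>Q\<in>P. card (bd s Q)) \<le> card (bd s G)" .
    then show ?thesis by (metis of_nat_le_iff of_nat_sum)
  qed
  have "(\<Sum>Q\<in>P. \<Sum>s\<in>\<F>. real (card (bd s Q))) = (\<Sum>s\<in>\<F>. \<Sum>Q\<in>P. real (card (bd s Q)))"
    by (rule sum.swap)
  also have "\<dots> \<le> (\<Sum>s\<in>\<F>. real (card (bd s G)))" by (rule sum_mono) (rule sumQ)
  also have "\<dots> < \<epsilon> * real (card G)" by (rule sumG)
  also have "\<dots> = (\<Sum>Q\<in>P. \<epsilon> * real (card Q))" using cardG by (simp add: sum_distrib_left)
  finally have lt: "(\<Sum>Q\<in>P. \<Sum>s\<in>\<F>. real (card (bd s Q))) < (\<Sum>Q\<in>P. \<epsilon> * real (card Q))" .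
  obtain Q where Q: "Q \<in> P" and Qlt: "(\<Sum>s\<in>\<F>. real (card (bd s Q))) < \<epsilon> * real (card Q)"
  proof (rule ccontr)
    assume "\<not> thesis"
    then have "\<forall>Q\<in>P. \<epsilon> * real (card Q) \<le> (\<Sum>s\<in>\<F>. real (card (bd s Q)))" using that by force
    then have "(\<Sum>Q\<in>P. \<epsilon> * real (card Q)) \<le> (\<Sum>Q\<in>P. \<Sum>s\<in>\<F>. real (card (bd s Q)))"
      by (intro sum_mono) auto
    then show False using lt by linarith
  qed
  show "\<exists>F0. finite F0 \<and> F0 \<noteq> {} \<and> F0 \<subseteq> A \<and>
              (\<forall>u\<in>F0. \<forall>v\<in>F0. orbit_rel mult \<alpha> u v) \<and>
              (\<forall>s\<in>\<F>. real (card (pimage (\<alpha> s) (F0 \<inter> Dom \<alpha> (mult (istar mult s) s)) - F0))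
                        < \<epsilon> * real (card F0))"
  proof (intro exI conjI ballI)
    show "finite Q" using finQ[OF Q] .
    show "Q \<noteq> {}" using in_quotient_imp_non_empty[OF eqR] Q P_def by blast
    show "Q \<subseteq> A" using Qsub[OF Q] GA by blast
    fix u v assume "u \<in> Q" "v \<in> Q"
    then have "(u, v) \<in> R" using in_quotient_imp_in_rel[OF eqR] Q P_def by blast
    then show "orbit_rel mult \<alpha> u v" unfolding orbit_rel_iff[OF im rep] R_def by blast
  next
    fix s assume s: "s \<in> \<F>"
    have "real (card (bd s Q)) \<le> (\<Sum>s\<in>\<F>. real (card (bd s Q)))"
      by (rule member_le_sum[OF s]) (auto intro: fin\<F>)
    then show "real (card (pimage (\<alpha> s) (Q \<inter> Dom \<alpha> (mult (istar mult s) s)) - Q)) < \<epsilon> * real (card Q)"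
      using Qlt unfolding bd_def by linarith
  qed
qed

end
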